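(* Let $R$ be an associative ring with identity and involution $*$, and let $a\in R^{\#}\cap R^{\dagger}$. Then $a\in R^{SEP}$ if and only if $a^{\dagger}a^3a^*a^{\dagger}\in PE(R)$.
   Context: An involution on $R$ is a map $x\mapsto x^*$ with $(x^* )^*=x$, $(x+y)^*=x^*+y^*$, $(xy)^*=y^*x^*$. An element $a$ is Moore–Penrose invertible if there is $b$ with $aba=a$, $bab=b$, $(ab)^*=ab$, $(ba)^*=ba$; such $b$ is unique, denoted $a^{\dagger}$, and $R^{\dagger}$ is the set of such $a$. An element $a$ is group invertible if there is $b$ with $aba=a$, $bab=b$, $ab=ba$; such $b$ is unique, denoted $a^{\#}$, and $R^{\#}$ is the set of such $a$. $PE(R)=\{e\in R: e^2=e=e^*\}$ is the set of projections. For $a\in R^{\#}\cap R^{\dagger}$, $a$ is SEP if $a^*=a^{\dagger}=a^{\#}$; $R^{SEP}$ denotes the set of SEP elements. *)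

theory Defs
  imports Main
begin

definition is_involution :: "('a::ring_1 \<Rightarrow> 'a) \<Rightarrow> bool" where
  "is_involution s \<longleftrightarrow>
     (\<forall>x. s (s x) = x) \<and> (\<forall>x y. s (x + y) = s x + s y) \<and> (\<forall>x y. s (x * y) = s y * s x)"

definition is_mp_inverse :: "('a::ring_1 \<Rightarrow> 'a) \<Rightarrow> 'a \<Rightarrow> 'a \<Rightarrow> bool" where
  "is_mp_inverse s a b \<longleftrightarrow> a * b * a = a \<and> b * a * b = b \<and> s (a * b) = a * b \<and> s (b * a) = b * a"

definition mp_invertible :: "('a::ring_1 \<Rightarrow> 'a) \<Rightarrow> 'a \<Rightarrow> bool" where
  "mp_invertible s a \<longleftrightarrow> (\<exists>b. is_mp_inverse s a b)"

definition mp_inv :: "('a::ring_1 \<Rightarrow> 'a) \<Rightarrow> 'a \<Rightarrow> 'a" where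
  "mp_inv s a = (THE b. is_mp_inverse s a b)"

definition is_group_inverse :: "'a::ring_1 \<Rightarrow> 'a \<Rightarrow> bool" where
  "is_group_inverse a b \<longleftrightarrow> a * b * a = a \<and> b * a * b = b \<and> a * b = b * a"

definition group_invertible :: "'a::ring_1 \<Rightarrow> bool" where
  "group_invertible a \<longleftrightarrow> (\<exists>b. is_group_inverse a b)"

definition group_inv :: "'a::ring_1 \<Rightarrow> 'a" where
  "group_inv a = (THE b. is_group_inverse a b)"

definition projection :: "('a::ring_1 \<Rightarrow> 'a) \<Rightarrow> 'a \<Rightarrow> bool" where
  "projection s e \<longleftrightarrow> e * e = e \<and> e = s e"

definition SEP :: "('a::ring_1 \<Rightarrow> 'a) \<Rightarrow> 'a \<Rightarrow> bool" where
  "SEP s a \<longleftrightarrow> group_invertible a \<and> mp_invertible s a \<and>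
     s a = mp_inv s a \<and> mp_inv s a = group_inv a"

end

theory Submission
  imports Defs
begin

lemma mp_unique:
  fixes s :: "'a::ring_1 \<Rightarrow> 'a"
  assumes inv: "is_involution s" and b: "is_mp_inverse s a b" and c: "is_mp_inverse s a c"
  shows "b = c"
proof -
  have ss: "\<And>x. s (s x) = x" and sm: "\<And>x y. s (x * y) = s y * s x"
    using inv by (auto simp: is_involution_def)
  have b1: "a*b*a = a" "b*a*b = b" "s (a*b) = a*b" "s (b*a) = b*a" using b by (auto simp: is_mp_inverse_def)
  have c1: "a*c*a = a" "c*a*c = c" "s (a*c) = a*c" "s (c*a) = c*a" using c by (auto simp: is_mp_inverse_def)
  have "b = b * (a*b)" using b1 by (simp add: mult.assoc)
  also have "\<dots> = b * s (a*b)" using b1 by simp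
  also have "\<dots> = b * s b * s a" by (simp add: sm mult.assoc)
  also have "s a = s (a*c*a)" using c1 by simp
  also have "b * s b * \<dots> = b * (s (a*b)) * s (a*c)" by (simp add: sm mult.assoc)
  also have "\<dots> = b * a * c" using b1 c1 by (simp add: mult.assoc)
  finally have e1: "b = b*a*c" .
  have "c = (c*a)*c" using c1 by (simp add: mult.assoc)
  also have "\<dots> = s (c*a) * c" using c1 by simp
  also have "\<dots> = s a * s c * c" by (simp add: sm mult.assoc)
  also have "s a = s (a*b*a)" using b1 by simp
  also have "\<dots> * s c * c = s (b*a) * s (c*a) * c" by (simp add: sm mult.assoc)
  also have "\<dots> = b * a * c" using b1 c1 by (simp add: mult.assoc)
  finally show ?thesis using e1 by simp
qed

lemma grp_unique:
  fixes a :: "'a::ring_1"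
  assumes b: "is_group_inverse a b" and c: "is_group_inverse a c"
  shows "b = c"
proof -
  have b1: "a*b*a = a" "b*a*b = b" "a*b = b*a" using b by (auto simp: is_group_inverse_def)
  have c1: "a*c*a = a" "c*a*c = c" "a*c = c*a" using c by (auto simp: is_group_inverse_def)
  have f1: "a*b*(a*c) = a*c" using b1 by (simp add: mult.assoc[symmetric])
  have f2: "b*a*(c*a) = b*a" using c1 by (metis mult.assoc)
  have e: "a*b = a*c" using f1 f2 b1 c1 by simp
  have "b = b*(a*b)" using b1 by (simp add: mult.assoc)
  also have "\<dots> = b*(a*c)" using e by simp
  also have "\<dots> = (a*b)*c" using b1 by (simp add: mult.assoc)
  also have "\<dots> = c" using e c1 by (simp add: mult.assoc)
  finally show ?thesis .
qed

lemma rmul: "u = v \<Longrightarrow> u*w = v*(w::'a::ring_1)" by simp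
lemma lmul: "u = v \<Longrightarrow> w*u = w*(v::'a::ring_1)" by simp

theorem theorem2p5:
  fixes s :: "'a::ring_1 \<Rightarrow> 'a" and a :: 'a
  assumes "is_involution s"
    and "group_invertible a" and "mp_invertible s a"
  shows "SEP s a \<longleftrightarrow>
    projection s (mp_inv s a * a ^ 3 * s a * mp_inv s a)"
proof -
  note inv = assms(1)
  have ss: "\<And>x. s (s x) = x" and sm: "\<And>x y. s (x * y) = s y * s x"
    using inv by (auto simp: is_involution_def)
  obtain b where bI: "is_mp_inverse s a b" using assms(3) mp_invertible_def by blast
  obtain g where gI: "is_group_inverse a g" using assms(2) group_invertible_def by blast
  have mpb: "mp_inv s a = b" unfolding mp_inv_def
    by (rule the_equality[where P="is_mp_inverse s a", OF bI]) (rule mp_unique[OF inv bI, symmetric])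
  have grg: "group_inv a = g" unfolding group_inv_def
    by (rule the_equality[where P="is_group_inverse a", OF gI]) (rule grp_unique[OF gI, symmetric])
  have b1: "a*b*a = a" "b*a*b = b" "s (a*b) = a*b" "s (b*a) = b*a" using bI by (auto simp: is_mp_inverse_def)
  have g1: "a*g*a = a" "g*a*g = g" "a*g = g*a" using gI by (auto simp: is_group_inverse_def)
  define x where "x = s a"
  have a3: "a^3 = a*a*a" by (simp add: power3_eq_cube)
  define P where "P = b*(a*a*a)*x*b"
  have Pdef: "mp_inv s a * a ^ 3 * s a * mp_inv s a = P" unfolding P_def x_def mpb a3 ..
  show ?thesis unfolding Pdef
  proof
    assume "SEP s a"
    then have xb0: "s a = b" and bg: "b = g" using mpb grg by (simp_all add: SEP_def)
    have xb: "x = b" using xb0 x_def by simp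
    have ab: "a*b = b*a" using g1(3) bg by simp
    have baa: "b*a*a = a" using ab[symmetric] b1(1) by simp
    have "P = (b*a*a)*a*b*b" unfolding P_def xb by (simp add: mult.assoc)
    also have "\<dots> = a*(a*b)*b" using baa by (simp add: mult.assoc)
    also have "\<dots> = a*(b*a*b)" using ab by (simp add: mult.assoc)
    also have "\<dots> = a*b" using b1(2) by simp
    finally have P: "P = a*b" .
    show "projection s P" unfolding projection_def P using b1 by (simp add: mult.assoc)
  next
    assume pr: "projection s P"
    have PP: "P*P = P" and sP: "s P = P" using pr by (auto simp: projection_def)
    have Pr: "P*(a*b) = P" unfolding P_def using b1 by (simp add: mult.assoc)
    have Pl: "(b*a)*P = P" unfolding P_def using b1 by (simp add: mult.assoc[symmetric])
    have "s (P*(a*b)) = s(a*b) * s P" by (rule sm)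
    then have I: "a*b*P = P" using Pr b1(3) sP by simp
    have "s ((b*a)*P) = s P * s (b*a)" by (rule sm)
    then have II0: "P*(b*a) = P" using Pl b1(4) sP by simp
    then have II: "P*b*a = P" by (simp add: mult.assoc)
    have e1: "a*(b*a) = a" using b1(1) by (simp add: mult.assoc)
    have "b*a*x = s (a*(b*a))" by (simp only: x_def sm[of a "b*a"] b1(4))
    also have "\<dots> = x" unfolding e1 x_def ..
    finally have bax: "b*a*x = x" .
    have "x*(a*b) = s ((a*b)*a)" by (simp only: x_def sm[of "a*b" a] b1(3))
    also have "\<dots> = x" unfolding b1(1) x_def ..
    finally have xab: "x*a*b = x" by (simp add: mult.assoc)
    have xsb: "x * s b = b*a" using b1(4) sm[of b a] unfolding x_def by simp
    have sbx: "s b * x = a*b" using b1(3) sm[of a b] unfolding x_def by simp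
    have xsg: "x * s g = s g * x" using g1(3) sm[of g a] sm[of a g] unfolding x_def by simp
    have "s (a*g*a) = x * s g * x" unfolding x_def by (simp add: sm mult.assoc)
    then have xgx: "x * s g * x = x" using g1(1) unfolding x_def by simp
    have kill: "x*b*(a*x*s g) = x"
    proof -
      have "x*b*(a*x*s g) = x*(b*a*x)*s g" by (simp add: mult.assoc)
      also have "\<dots> = x*(x*s g)" using bax by (simp add: mult.assoc)
      also have "\<dots> = x*(s g*x)" by (simp only: xsg)
      also have "\<dots> = x*s g*x" by (simp only: mult.assoc)
      also have "\<dots> = x" using xgx .
      finally show ?thesis .
    qed
    have "a*a*g = a*(g*a)" by (simp only: mult.assoc g1(3))
    also have "\<dots> = a" using g1(1) by (simp only: mult.assoc[symmetric])
    finally have aag: "a*a*g = a" .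
    have "g*a*a = (a*g)*a" by (simp only: g1(3))
    also have "\<dots> = a" using g1(1) .
    finally have gaa: "g*a*a = a" .
    have g2: "a*a*a*g*g = a"
    proof -
      have "a*a*a*g*g = a*(a*a*g)*g" by (simp only: mult.assoc)
      also have "\<dots> = a*a*g" by (simp only: aag)
      also have "\<dots> = a" by (rule aag)
      finally show ?thesis .
    qed
    have g2': "g*g*a*a*a = a"
    proof -
      have "g*g*a*a*a = g*(g*a*a)*a" by (simp only: mult.assoc)
      also have "\<dots> = g*a*a" by (simp only: gaa)
      also have "\<dots> = a" by (rule gaa)
      finally show ?thesis .
    qed
    have killr: "x*(b*(a*(x*s g))) = x" using kill by (simp only: mult.assoc)
    have g2r: "\<And>y. a*(a*(a*(g*(g*y)))) = a*y" using g2 by (simp add: mult.assoc[symmetric])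
    have g2rr: "a*(a*(a*(g*g))) = a" using g2 by (simp add: mult.assoc[symmetric])
    have g2'r: "\<And>y. g*(g*(a*(a*(a*y)))) = a*y" using g2' by (simp add: mult.assoc[symmetric])
    have e2: "b*(a*b) = b" using b1(2) by (simp only: mult.assoc)
    have e3: "\<And>y. a*(b*(a*y)) = a*y" using b1(1) by (simp add: mult.assoc[symmetric])
    have baxr: "\<And>y. b*(a*(x*y)) = x*y" using bax by (simp add: mult.assoc[symmetric])
    have sbxr: "\<And>y. s b*(x*y) = a*(b*y)" using sbx by (simp add: mult.assoc[symmetric])
    have s1a: "a*(b*(b*(a*(a*(a*(x*b)))))) = b*(a*(a*(a*(x*b))))"
      using I unfolding P_def by (simp only: mult.assoc)
    have h1: "a*(b*(b*(a*(a*(a*x))))) = b*(a*(a*(a*x)))"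
      using rmul[OF s1a, of "a*(x*s g)"] by (simp only: mult.assoc killr)
    have h2: "a*(b*(b*(a*(a*a)))) = b*(a*(a*a))"
      using rmul[OF h1, of "s b"] by (simp only: mult.assoc xsb e1)
    have h3: "a*(b*(b*a)) = b*a"
      using rmul[OF h2, of "g*g"] by (simp only: mult.assoc g2rr)
    have S1: "a*(b*b) = b"
      using rmul[OF h3, of "b"] by (simp only: mult.assoc e2)
    have S1r: "\<And>y. a*(b*(b*y)) = b*y" using S1 by (simp add: mult.assoc[symmetric])
    have s2a: "b*(a*(a*(a*(x*(b*(b*a)))))) = b*(a*(a*(a*(x*b))))"
      using II unfolding P_def by (simp only: mult.assoc)
    have k1: "a*(a*(a*(x*(b*(b*a))))) = a*(a*(a*(x*b)))"
      using lmul[OF s2a, of a] by (simp only: mult.assoc e3)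
    have k2: "a*(x*(b*(b*a))) = a*(x*b)"
      using lmul[OF k1, of "g*g"] by (simp only: mult.assoc g2'r)
    have k3: "x*(b*(b*a)) = x*b"
      using lmul[OF k2, of b] by (simp only: mult.assoc baxr)
    have k4: "a*(b*(b*(b*a))) = a*(b*b)"
      using lmul[OF k3, of "s b"] by (simp only: mult.assoc sbxr)
    have S2: "b*(b*a) = b" using k4 by (simp only: S1r S1)
    have "a*b = a*(b*(b*a))" using S2 by simp
    also have "\<dots> = (a*(b*b))*a" by (simp only: mult.assoc)
    finally have EP: "a*b = b*a" using S1 by simp
    have bgi: "is_group_inverse a b" using b1 EP by (simp add: is_group_inverse_def)
    have bg: "b = g" using grp_unique[OF bgi gI] .
    have baa: "b*(a*a) = a" using EP b1(1) by (simp add: mult.assoc[symmetric])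
    have baar: "\<And>y. b*(a*(a*y)) = a*y" using baa by (simp add: mult.assoc[symmetric])
    have xba: "x*(b*a) = x" using xab EP by (simp add: mult.assoc)
    have xbar: "\<And>y. x*(b*(a*y)) = x*y" using xba by (simp add: mult.assoc[symmetric])
    have P2: "P = a*(a*(x*b))" unfolding P_def by (simp only: mult.assoc baar)
    have "a*(a*(x*(b*(a*(a*(x*b)))))) = a*(a*(x*b))"
      using PP unfolding P2 by (simp only: mult.assoc)
    then have m1: "a*(a*(x*(a*(x*b)))) = a*(a*(x*b))" by (simp only: xbar)
    have bbaa: "\<And>y. b*(b*(a*(a*y))) = b*(a*y)" using baar by simp
    have m2: "x*(a*(x*b)) = x*b"
      using lmul[OF m1, of "b*b"] by (simp only: mult.assoc bbaa baxr)
    have xax: "x*(a*x) = x"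
      using rmul[OF m2, of a] by (simp only: mult.assoc xba xbar)
    have axa: "a*x*a = a" using arg_cong[OF xax, of s] unfolding x_def by (simp add: sm ss mult.assoc)
    have xI: "is_mp_inverse s a x" unfolding is_mp_inverse_def
      using axa xax unfolding x_def by (simp add: sm ss mult.assoc)
    have "b = x" using mp_unique[OF inv bI xI] .
    then show "SEP s a" unfolding SEP_def using assms(2,3) mpb grg bg x_def by simp
  qed
qed

end
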